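(* Let $n\ge2$ and $g\in G$. Consider the linear maps $\mathcal{R},\mathcal{S}:\mathfrak{n}\to\mathbb{R}^{n-1}$ where $\mathcal{R}(X)$ is the vector of the last $n-1$ entries of the first row of $gXg^{-1}$ and $\mathcal{S}(X)$ is the vector of the last $n-1$ entries of the second row of $gXg^{-1}$. Then at least one of $\mathcal{R}$, $\mathcal{S}$ is invertible.
   Context: $G=\mathrm{SO}(1,n)$ realized as the group of $g\in\mathrm{SL}_{n+1}(\mathbb{R})$ with $g\begin{pmatrix}J&0\\0&I_{n-1}\end{pmatrix}g^T=\begin{pmatrix}J&0\\0&I_{n-1}\end{pmatrix}$, $J=\begin{pmatrix}0&1\\1&0\end{pmatrix}$ (the special isometry group of $2x_0x_1+x_2^2+\dots+x_n^2$). Its Lie algebra consists of block matrices $\begin{pmatrix}a&b\\c&d\end{pmatrix}$ with $a\in\mathbb{R}\,\mathrm{diag}(1,-1)$, $b\in M_{2\times(n-1)}(\mathbb{R})$ arbitrary, $c=-b^TJ$, $d=-d^T$. $\mathfrak{n}$ is the abelian subalgebra of elements $X(R)=\begin{pmatrix}0&b\\c&0\end{pmatrix}$ with $b=\begin{pmatrix}R\\0\end{pmatrix}$, $R\in M_{1\times(n-1)}(\mathbb{R})$, $c=-b^TJ$. *)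

theory Defs
  imports "Jordan_Normal_Form.Determinant"
begin

text \<open>Matrices are (n+1)x(n+1) with indices 0..n; the index 0,1 block is the
hyperbolic plane 2 x0 x1, indices 2..n carry x2^2+...+xn^2.\<close>

definition Qform :: "nat \<Rightarrow> real mat" where
  "Qform n = mat (n+1) (n+1) (\<lambda>(i,j).
      if (i = 0 \<and> j = 1) \<or> (i = 1 \<and> j = 0) then 1
      else if 2 \<le> i \<and> i = j then 1 else 0)"

definition SO1n :: "nat \<Rightarrow> real mat set" where
  "SO1n n = {g. g \<in> carrier_mat (n+1) (n+1) \<and> det g = 1 \<and>
                g * Qform n * transpose_mat g = Qform n}"

definition mat_inv :: "nat \<Rightarrow> real mat \<Rightarrow> real mat" where
  "mat_inv n g = (SOME h. h \<in> carrier_mat n n \<and> g * h = 1\<^sub>m n \<and> h * g = 1\<^sub>m n)"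

text \<open>X(R) for R a vector of length n-1 (entries R_0..R_{n-2}):
  b = (R;0), c = -b^T J, so X(0,j+2) = R_j, X(j+2,1) = -R_j.\<close>
definition Xn :: "nat \<Rightarrow> real vec \<Rightarrow> real mat" where
  "Xn n R = mat (n+1) (n+1) (\<lambda>(i,j).
      if i = 0 \<and> 2 \<le> j then R $ (j - 2)
      else if 2 \<le> i \<and> j = 1 then - R $ (i - 2) else 0)"

definition nfrak :: "nat \<Rightarrow> real mat set" where
  "nfrak n = Xn n ` carrier_vec (n - 1)"

text \<open>Last n-1 entries of row k of g X g^{-1}.\<close>
definition rowmap :: "nat \<Rightarrow> real mat \<Rightarrow> nat \<Rightarrow> real mat \<Rightarrow> real vec" where
  "rowmap n g k X = vec (n - 1) (\<lambda>j. (g * X * mat_inv (n+1) g) $$ (k, j + 2))"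

end

theory Submission imports Defs begin
definition sw :: "nat \<Rightarrow> nat" where "sw i = (if i = 0 then 1 else if i = 1 then 0 else i)"
lemma sw_sw[simp]: "sw (sw i) = i" by (simp add: sw_def)
lemma sw_lt[simp]: "i < Suc n \<Longrightarrow> 1 \<le> n \<Longrightarrow> sw i < n + 1" by (auto simp add: sw_def)
lemma Q_dim[simp]: "dim_row (Qform n) = Suc n" "dim_col (Qform n) = Suc n" by (simp_all add: Qform_def)
lemma Q_carrier[simp]: "Qform n \<in> carrier_mat (Suc n) (Suc n)" by (simp add: Qform_def)
lemma sw_eq: "(i = sw l) = (l = sw i)" by (auto simp: sw_def)
lemma Q_entry: "i < Suc n \<Longrightarrow> j < Suc n \<Longrightarrow> j < n+1 \<Longrightarrow> Qform n $$ (i,j) = (if i = sw j then 1 else 0)"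
  by (auto simp add: Qform_def sw_def)
lemma mult_Q_right: assumes "A \<in> carrier_mat (n+1) (n+1)" "i < n+1" "j < n+1" "1 \<le> n"
  shows "(A * Qform n) $$ (i,j) = A $$ (i, sw j)"
proof -
  have "(A * Qform n) $$ (i,j) = (\<Sum>l\<in>{0..<n+1}. A $$ (i,l) * Qform n $$ (l,j))"
    using assms by (simp add: scalar_prod_def del: sum.op_ivl_Suc)
  also have "\<dots> = (\<Sum>l\<in>{0..<n+1}. if l = sw j then A $$ (i,l) else 0)"
    using assms by (intro sum.cong, auto simp: Q_entry sw_eq)
  also have "\<dots> = A $$ (i, sw j)" using assms sw_lt[of j n] by (simp only: sum.delta atLeastLessThan_iff) simp
  finally show ?thesis .
qed
lemma Q_mult_vec: assumes "y \<in> carrier_vec (n+1)" "i < n+1" "1 \<le> n"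
  shows "(Qform n *\<^sub>v y) $ i = y $ (sw i)"
proof -
  have "(Qform n *\<^sub>v y) $ i = (\<Sum>l\<in>{0..<n+1}. Qform n $$ (i,l) * y $ l)"
    using assms by (simp add: scalar_prod_def del: sum.op_ivl_Suc)
  also have "\<dots> = (\<Sum>l\<in>{0..<n+1}. if l = sw i then y $ l else 0)"
    using assms by (intro sum.cong, auto simp: Q_entry sw_eq)
  also have "\<dots> = y $ (sw i)" using assms sw_lt[of i n] by (simp only: sum.delta atLeastLessThan_iff) simp
  finally show ?thesis .
qed
lemma QQ: assumes "1 \<le> n" shows "Qform n * Qform n = 1\<^sub>m (n+1)"
proof (rule eq_matI)
  fix i j assume ij: "i < dim_row (1\<^sub>m (n+1))" "j < dim_col (1\<^sub>m (n+1) :: real mat)"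
  have "(Qform n * Qform n) $$ (i,j) = Qform n $$ (i, sw j)"
    using ij assms by (intro mult_Q_right) auto
  also have "\<dots> = 1\<^sub>m (n+1) $$ (i,j)" using ij assms by (auto simp: Q_entry sw_def)
  finally show "(Qform n * Qform n) $$ (i,j) = 1\<^sub>m (n+1) $$ (i,j)" .
qed auto

definition Bs :: "nat \<Rightarrow> real vec \<Rightarrow> real vec \<Rightarrow> real" where
  "Bs n x y = (\<Sum>i\<in>{0..<n+1}. x $ i * y $ (sw i))"

lemma Bs_eq: assumes "x \<in> carrier_vec (n+1)" "y \<in> carrier_vec (n+1)" "1 \<le> n"
  shows "x \<bullet> (Qform n *\<^sub>v y) = Bs n x y"
  unfolding Bs_def scalar_prod_def using assms
  by (intro sum.cong, auto simp del: index_mult_mat_vec simp: Q_mult_vec[simplified])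

locale SOg =
  fixes n :: nat and g :: "real mat"
  assumes n2: "2 \<le> n" and gS: "g \<in> SO1n n"
begin

abbreviation "Q \<equiv> Qform n"
definition "h = Q * transpose_mat g * Q"

lemma n1: "1 \<le> n" using n2 by simp
lemma g_carr[simp]: "g \<in> carrier_mat (Suc n) (Suc n)" using gS by (simp add: SO1n_def)
lemma g_dim[simp]: "dim_row g = Suc n" "dim_col g = Suc n" using carrier_matD[OF g_carr] by auto
lemma mc[simp]: "A \<in> carrier_mat (Suc n) (Suc n) \<Longrightarrow> B \<in> carrier_mat (Suc n) (Suc n) \<Longrightarrow> A * B \<in> carrier_mat (Suc n) (Suc n)"
  by (rule mult_carrier_mat)
lemma tc[simp]: "A \<in> carrier_mat (Suc n) (Suc n) \<Longrightarrow> transpose_mat A \<in> carrier_mat (Suc n) (Suc n)"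
  by simp
lemma mvc[simp]: "A \<in> carrier_mat (Suc n) (Suc n) \<Longrightarrow> x \<in> carrier_vec (Suc n) \<Longrightarrow> A *\<^sub>v x \<in> carrier_vec (Suc n)"
  by (rule mult_mat_vec_carrier)
lemma A3: "A \<in> carrier_mat (Suc n) (Suc n) \<Longrightarrow> B \<in> carrier_mat (Suc n) (Suc n) \<Longrightarrow> C \<in> carrier_mat (Suc n) (Suc n) \<Longrightarrow> A * B * C = A * (B * C)"
  by (rule assoc_mult_mat)
lemma AV: "A \<in> carrier_mat (Suc n) (Suc n) \<Longrightarrow> B \<in> carrier_mat (Suc n) (Suc n) \<Longrightarrow> v \<in> carrier_vec (Suc n) \<Longrightarrow> (A * B) *\<^sub>v v = A *\<^sub>v (B *\<^sub>v v)"
  by (rule assoc_mult_mat_vec)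
lemma Qc: "Q \<in> carrier_mat (Suc n) (Suc n)" by simp
lemma gTc: "transpose_mat g \<in> carrier_mat (Suc n) (Suc n)" by simp
lemma gQg: "g * Q * transpose_mat g = Q" using gS by (simp add: SO1n_def)
lemma h_carr[simp]: "h \<in> carrier_mat (Suc n) (Suc n)" by (simp add: h_def)
lemma h_dim[simp]: "dim_row h = Suc n" "dim_col h = Suc n" using carrier_matD[OF h_carr] by auto
lemma gh: "g * h = 1\<^sub>m (Suc n)"
proof -
  have "g * h = (g * Q * transpose_mat g) * Q"
    unfolding h_def by (simp add: A3)
  also have "\<dots> = 1\<^sub>m (Suc n)" using gQg QQ[OF n1] by simp
  finally show ?thesis .
qed
lemma hg: "h * g = 1\<^sub>m (Suc n)"
  by (rule mat_mult_left_right_inverse[OF g_carr h_carr gh])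
lemma mat_inv_eq: "mat_inv (Suc n) g = h"
proof -
  let ?P = "\<lambda>h'. h' \<in> carrier_mat (Suc n) (Suc n) \<and> g * h' = 1\<^sub>m (Suc n) \<and> h' * g = 1\<^sub>m (Suc n)"
  have Ph: "?P h" using gh hg h_carr by simp
  have uniq: "h' = h" if "?P h'" for h'
  proof -
    have "h' = (h * g) * h'" using that hg by (auto intro: left_mult_one_mat[symmetric])
    also have "\<dots> = h * (g * h')" using that by (intro A3) auto
    also have "\<dots> = h" using that right_mult_one_mat[OF h_carr] by auto
    finally show ?thesis .
  qed
  show ?thesis unfolding mat_inv_def using someI[of ?P, OF Ph] uniq by blast
qed
lemma gTQg: "transpose_mat g * Q * g = Q"
proof -
  have "Q * (h * g) = Q" using hg by simp
  also have "Q * (h * g) = (Q * Q) * (transpose_mat g * Q * g)"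
    unfolding h_def by (simp add: A3)
  also have "\<dots> = transpose_mat g * Q * g" using QQ[OF n1] by simp
  finally show ?thesis .
qed

lemma Bs_inv: assumes "x \<in> carrier_vec (Suc n)" "y \<in> carrier_vec (Suc n)"
  shows "Bs n (g *\<^sub>v x) (g *\<^sub>v y) = Bs n x y"
proof -
  have "Bs n (g *\<^sub>v x) (g *\<^sub>v y) = (g *\<^sub>v x) \<bullet> (Q *\<^sub>v (g *\<^sub>v y))"
    using assms n1 by (intro Bs_eq[symmetric]) auto
  also have "\<dots> = (Q *\<^sub>v (g *\<^sub>v y)) \<bullet> (g *\<^sub>v x)"
    using assms by (intro comm_scalar_prod[of _ "n+1"]) auto
  also have "\<dots> = (transpose_mat g *\<^sub>v (Q *\<^sub>v (g *\<^sub>v y))) \<bullet> x"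
    using assms by (intro transpose_vec_mult_scalar[symmetric, of _ "n+1" "n+1"]) auto
  also have "transpose_mat g *\<^sub>v (Q *\<^sub>v (g *\<^sub>v y)) = (transpose_mat g * Q * g) *\<^sub>v y"
    using assms by (simp add: AV)
  also have "\<dots> = Q *\<^sub>v y" using gTQg by simp
  also have "(Q *\<^sub>v y) \<bullet> x = x \<bullet> (Q *\<^sub>v y)"
    using assms by (intro comm_scalar_prod[of _ "n+1"]) auto
  also have "\<dots> = Bs n x y" using assms n1 by (intro Bs_eq) auto
  finally show ?thesis .
qed
end

definition wedge :: "nat \<Rightarrow> real vec \<Rightarrow> real vec \<Rightarrow> real mat" where
  "wedge N x y = mat N N (\<lambda>(i,j). x$i * y$j - y$i * x$j)"
definition uvec :: "nat \<Rightarrow> real vec \<Rightarrow> real vec" where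
  "uvec n R = vec (Suc n) (\<lambda>i. if 2 \<le> i then R $ (i-2) else 0)"

lemma sum_lin: "(\<Sum>k\<in>A. c k * (a k * s - b k * t)) = (\<Sum>k\<in>A. c k * a k) * s - (\<Sum>k\<in>A. c k * b k) * (t::real)"
  by (simp add: right_diff_distrib sum_subtractf sum_distrib_right mult.assoc)
lemma sum_lin2: "(\<Sum>k\<in>A. (p * a k - r * b k) * c k) = p * (\<Sum>k\<in>A. c k * a k) - r * (\<Sum>k\<in>A. c k * b k::real)"
  by (simp add: sum_distrib_left sum_subtractf[symmetric] algebra_simps)

lemma QQM[simp]: "M \<in> carrier_mat (Suc n) (Suc n) \<Longrightarrow> 1 \<le> n \<Longrightarrow> Qform n * (Qform n * M) = M"
  using QQ[of n] by (simp add: assoc_mult_mat[symmetric, of _ "Suc n" "Suc n" _ "Suc n" M "Suc n"])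

lemma wedge_carr[simp]: "wedge N x y \<in> carrier_mat N N" by (simp add: wedge_def)
lemma wedge_dim[simp]: "dim_row (wedge N x y) = N" "dim_col (wedge N x y) = N" by (simp_all add: wedge_def)

context SOg begin

lemma Xn_wedge: "Xn n R = wedge (Suc n) (unit_vec (Suc n) 0) (uvec n R) * Q"
proof (rule eq_matI)
  fix i j assume ij: "i < dim_row (wedge (Suc n) (unit_vec (Suc n) 0) (uvec n R) * Q)"
    "j < dim_col (wedge (Suc n) (unit_vec (Suc n) 0) (uvec n R) * Q)"
  then have ij': "i < Suc n" "j < Suc n" by auto
  have "(wedge (Suc n) (unit_vec (Suc n) 0) (uvec n R) * Q) $$ (i,j)
      = wedge (Suc n) (unit_vec (Suc n) 0) (uvec n R) $$ (i, sw j)"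
    using ij' n1 by (intro mult_Q_right) auto
  also have "\<dots> = Xn n R $$ (i,j)"
    using ij' n1 sw_lt[of j n] by (auto simp: wedge_def uvec_def Xn_def sw_def)
  finally show "Xn n R $$ (i,j) = (wedge (Suc n) (unit_vec (Suc n) 0) (uvec n R) * Q) $$ (i,j)" by simp
qed (auto simp: Xn_def wedge_def)

lemma gW: assumes "x \<in> carrier_vec (Suc n)" "y \<in> carrier_vec (Suc n)"
  shows "g * wedge (Suc n) x y = mat (Suc n) (Suc n) (\<lambda>(i,l). (g *\<^sub>v x)$i * y$l - (g *\<^sub>v y)$i * x$l)"
proof (rule eq_matI)
  fix i l assume "i < dim_row (mat (Suc n) (Suc n) (\<lambda>(i,l). (g *\<^sub>v x)$i * y$l - (g *\<^sub>v y)$i * x$l))"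
    "l < dim_col (mat (Suc n) (Suc n) (\<lambda>(i,l). (g *\<^sub>v x)$i * y$l - (g *\<^sub>v y)$i * x$l))"
  then have il: "i < Suc n" "l < Suc n" by auto
  have "(g * wedge (Suc n) x y) $$ (i,l) = (\<Sum>k\<in>{0..<Suc n}. g $$ (i,k) * (x$k * y$l - y$k * x$l))"
    using il assms by (simp add: scalar_prod_def wedge_def del: sum.op_ivl_Suc)
  also have "\<dots> = (\<Sum>k\<in>{0..<Suc n}. g $$ (i,k) * x$k) * y$l - (\<Sum>k\<in>{0..<Suc n}. g $$ (i,k) * y$k) * x$l"
    by (rule sum_lin)
  also have "\<dots> = (g *\<^sub>v x)$i * y$l - (g *\<^sub>v y)$i * x$l"
    using il assms by (simp add: scalar_prod_def del: sum.op_ivl_Suc)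
  finally show "(g * wedge (Suc n) x y) $$ (i,l) = mat (Suc n) (Suc n) (\<lambda>(i,l). (g *\<^sub>v x)$i * y$l - (g *\<^sub>v y)$i * x$l) $$ (i,l)"
    using il by simp
qed auto

lemma gWg: assumes "x \<in> carrier_vec (Suc n)" "y \<in> carrier_vec (Suc n)"
  shows "g * wedge (Suc n) x y * transpose_mat g = wedge (Suc n) (g *\<^sub>v x) (g *\<^sub>v y)"
proof (rule eq_matI)
  fix i j assume "i < dim_row (wedge (Suc n) (g *\<^sub>v x) (g *\<^sub>v y))"
    "j < dim_col (wedge (Suc n) (g *\<^sub>v x) (g *\<^sub>v y))"
  then have ij: "i < Suc n" "j < Suc n" by (auto simp: wedge_def)
  have "(g * wedge (Suc n) x y * transpose_mat g) $$ (i,j)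
     = (\<Sum>l\<in>{0..<Suc n}. ((g *\<^sub>v x)$i * y$l - (g *\<^sub>v y)$i * x$l) * g $$ (j,l))"
    using ij assms by (simp add: gW scalar_prod_def del: sum.op_ivl_Suc)
  also have "\<dots> = (g *\<^sub>v x)$i * (\<Sum>l\<in>{0..<Suc n}. g $$ (j,l) * y$l) - (g *\<^sub>v y)$i * (\<Sum>l\<in>{0..<Suc n}. g $$ (j,l) * x$l)"
    by (rule sum_lin2)
  also have "\<dots> = wedge (Suc n) (g *\<^sub>v x) (g *\<^sub>v y) $$ (i,j)"
    using ij assms by (simp add: wedge_def scalar_prod_def del: sum.op_ivl_Suc)
  finally show "(g * wedge (Suc n) x y * transpose_mat g) $$ (i,j) = wedge (Suc n) (g *\<^sub>v x) (g *\<^sub>v y) $$ (i,j)" .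
qed (auto simp: wedge_def)

lemma ge0[simp]: "i < Suc n \<Longrightarrow> (g *\<^sub>v unit_vec (Suc n) 0) $ i = g $$ (i,0)"
  by simp
lemma uvec_dim[simp]: "dim_vec (uvec n R) = Suc n" by (simp add: uvec_def)
lemma uvec_carr[simp]: "uvec n R \<in> carrier_vec (Suc n)" by (simp add: uvec_def)

lemma rowmap_eq: assumes "k < Suc n"
  shows "rowmap n g k (Xn n R) = vec (n-1) (\<lambda>j.
     (g *\<^sub>v unit_vec (Suc n) 0)$k * (g *\<^sub>v uvec n R)$(j+2) - (g *\<^sub>v uvec n R)$k * (g *\<^sub>v unit_vec (Suc n) 0)$(j+2))"
proof -
  let ?W = "wedge (Suc n) (unit_vec (Suc n) 0) (uvec n R)"
  have "g * Xn n R * mat_inv (n+1) g = g * (?W * Q) * h" using mat_inv_eq Xn_wedge by simp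
  also have "\<dots> = (g * ?W * transpose_mat g) * Q" unfolding h_def using n1 by (simp add: A3)
  also have "\<dots> = wedge (Suc n) (g *\<^sub>v unit_vec (Suc n) 0) (g *\<^sub>v uvec n R) * Q" by (simp add: gWg)
  finally have eq: "g * Xn n R * mat_inv (n+1) g = wedge (Suc n) (g *\<^sub>v unit_vec (Suc n) 0) (g *\<^sub>v uvec n R) * Q" .
  show ?thesis unfolding rowmap_def eq
  proof (rule eq_vecI)
    fix j assume "j < dim_vec (vec (n-1) (\<lambda>j.
     (g *\<^sub>v unit_vec (Suc n) 0)$k * (g *\<^sub>v uvec n R)$(j+2) - (g *\<^sub>v uvec n R)$k * (g *\<^sub>v unit_vec (Suc n) 0)$(j+2)))"
    then have j: "j + 2 < Suc n" using n2 by auto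
    have "(wedge (Suc n) (g *\<^sub>v unit_vec (Suc n) 0) (g *\<^sub>v uvec n R) * Q) $$ (k, j+2)
       = wedge (Suc n) (g *\<^sub>v unit_vec (Suc n) 0) (g *\<^sub>v uvec n R) $$ (k, sw (j+2))"
      using j assms n1 by (intro mult_Q_right) auto
    then show "vec (n-1) (\<lambda>j. (wedge (Suc n) (g *\<^sub>v unit_vec (Suc n) 0) (g *\<^sub>v uvec n R) * Q) $$ (k, j+2)) $ j =
      vec (n-1) (\<lambda>j. (g *\<^sub>v unit_vec (Suc n) 0)$k * (g *\<^sub>v uvec n R)$(j+2) - (g *\<^sub>v uvec n R)$k * (g *\<^sub>v unit_vec (Suc n) 0)$(j+2)) $ j"
      using j assms by (simp add: wedge_def sw_def del: index_mult_mat_vec)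
  qed simp
qed

end

lemma quad_exp: "(\<Sum>i\<in>A. (p * v i - q * a i) * (p * v (s i) - q * a (s i))) =
   p^2 * (\<Sum>i\<in>A. v i * v (s i)) - p * q * (\<Sum>i\<in>A. v i * a (s i)) - p * q * (\<Sum>i\<in>A. a i * v (s i))
   + q^2 * (\<Sum>i\<in>A. a i * a (s i))" for p q :: real
  by (simp add: sum_distrib_left sum_subtractf[symmetric] sum.distrib[symmetric] power2_eq_square algebra_simps)

lemma Bs_e0_e0: "1 \<le> n \<Longrightarrow> Bs n (unit_vec (Suc n) 0) (unit_vec (Suc n) 0) = 0"
  unfolding Bs_def by (intro sum.neutral) (auto simp: sw_def)
lemma Bs_e0_u: "1 \<le> n \<Longrightarrow> Bs n (unit_vec (Suc n) 0) (uvec n R) = 0"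
  unfolding Bs_def by (intro sum.neutral) (auto simp: sw_def uvec_def)
lemma Bs_u_e0: "1 \<le> n \<Longrightarrow> Bs n (uvec n R) (unit_vec (Suc n) 0) = 0"
  unfolding Bs_def by (intro sum.neutral) (auto simp: sw_def uvec_def)

context SOg begin

lemma kernel:
  assumes k: "k < 2" and ak: "g $$ (k,0) \<noteq> 0"
    and z: "\<forall>j<n-1. g $$ (k,0) * (g *\<^sub>v uvec n R)$(j+2) - (g *\<^sub>v uvec n R)$k * g $$ (j+2,0) = 0"
  shows "\<forall>j<n-1. R $ j = 0"
proof -
  define a where "a = g *\<^sub>v unit_vec (Suc n) 0"
  define v where "v = g *\<^sub>v uvec n R"
  define p where "p = g $$ (k,0)"
  define q where "q = v $ k"
  have ai: "a $ i = g $$ (i,0)" if "i < Suc n" for i using that unfolding a_def by simp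
  have pk: "p = a $ k" using k n1 ai by (simp add: p_def)
  have S0: "(\<Sum>i\<in>{0..<n+1}. (p * v$i - q * a$i) * (p * v$(sw i) - q * a$(sw i))) = 0"
  proof (intro sum.neutral ballI)
    fix i assume i: "i \<in> {0..<n+1}"
    show "(p * v$i - q * a$i) * (p * v$(sw i) - q * a$(sw i)) = 0"
    proof (cases "2 \<le> i")
      case True
      then obtain j where ij: "i = j + 2" by (metis add.commute le_add_diff_inverse)
      then have "p * v$i - q * a$i = 0" using z[rule_format, of j] i ai[of i]
        by (simp add: p_def q_def v_def)
      then show ?thesis by simp
    next
      case False
      have "p * v$k - q * a$k = 0" by (simp add: pk q_def)
      moreover have "i = 0 \<or> i = 1" using False by auto
      moreover have "k = 0 \<or> k = 1" using k by auto
      ultimately show ?thesis by (auto simp: sw_def)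
    qed
  qed
  have ca: "unit_vec (Suc n) 0 \<in> carrier_vec (Suc n)" by simp
  have Baa: "Bs n a a = 0" unfolding a_def using Bs_inv[OF ca ca] Bs_e0_e0[OF n1] by simp
  have Bav: "Bs n a v = 0" unfolding a_def v_def using Bs_inv[OF ca uvec_carr] Bs_e0_u[OF n1] by simp
  have Bva: "Bs n v a = 0" unfolding a_def v_def using Bs_inv[OF uvec_carr ca] Bs_u_e0[OF n1] by simp
  have Bvv: "Bs n v v = Bs n (uvec n R) (uvec n R)" unfolding v_def using Bs_inv[OF uvec_carr uvec_carr] by simp
  have "p^2 * Bs n v v = 0"
    using S0 Baa Bav Bva unfolding Bs_def quad_exp by simp
  then have B0: "Bs n (uvec n R) (uvec n R) = 0" using ak Bvv by (simp add: p_def)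
  have nn: "\<forall>i\<in>{0..<n+1}. 0 \<le> (uvec n R)$i * (uvec n R)$(sw i)"
    by (auto simp: uvec_def sw_def)
  have all0: "\<forall>i\<in>{0..<n+1}. (uvec n R)$i * (uvec n R)$(sw i) = 0"
    using B0 unfolding Bs_def by (subst (asm) sum_nonneg_eq_0_iff) (use nn in auto)
  show ?thesis
  proof (intro allI impI)
    fix j assume j: "j < n - 1"
    have "(uvec n R)$(j+2) * (uvec n R)$(sw (j+2)) = 0" using all0 j by auto
    then show "R $ j = 0" using j by (simp add: uvec_def sw_def)
  qed
qed

lemma a_nonzero: "g $$ (0,0) \<noteq> 0 \<or> g $$ (1,0) \<noteq> 0"
proof (rule ccontr)
  assume "\<not> ?thesis"
  then have z: "g $$ (0,0) = 0" "g $$ (1,0) = 0" by auto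
  define a where "a = g *\<^sub>v unit_vec (Suc n) 0"
  have ai: "a $ i = g $$ (i,0)" if "i < Suc n" for i using that unfolding a_def by simp
  have ca: "unit_vec (Suc n) 0 \<in> carrier_vec (Suc n)" by simp
  have Baa: "Bs n a a = 0" unfolding a_def using Bs_inv[OF ca ca] Bs_e0_e0[OF n1] by simp
  have nn: "\<forall>i\<in>{0..<n+1}. 0 \<le> a$i * a$(sw i)"
    using z ai n1 by (auto simp: sw_def)
  have all0: "\<forall>i\<in>{0..<n+1}. a$i * a$(sw i) = 0"
    using Baa unfolding Bs_def by (subst (asm) sum_nonneg_eq_0_iff) (use nn in auto)
  have a0: "a = 0\<^sub>v (Suc n)"
  proof (rule eq_vecI)
    fix i assume "i < dim_vec (0\<^sub>v (Suc n) :: real vec)"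
    then have i: "i < Suc n" by simp
    show "a $ i = 0\<^sub>v (Suc n) $ i"
    proof (cases "2 \<le> i")
      case True then show ?thesis using all0 i by (auto simp: sw_def)
    next
      case False then have "i = 0 \<or> i = 1" by auto
      then show ?thesis using z ai i n1 by auto
    qed
  qed (simp add: a_def)
  have "unit_vec (Suc n) 0 = (h * g) *\<^sub>v unit_vec (Suc n) 0" using hg by simp
  also have "\<dots> = h *\<^sub>v a" unfolding a_def by (simp add: AV)
  also have "\<dots> = 0\<^sub>v (Suc n)" unfolding a0 using h_carr by (intro eq_vecI) auto
  finally have "unit_vec (Suc n) 0 $ 0 = (0\<^sub>v (Suc n) :: real vec) $ 0" by simp
  then show False by simp
qed


definition Mk :: "nat \<Rightarrow> real mat" where
  "Mk k = mat (n-1) (n-1) (\<lambda>(j,m). g$$(k,0) * g$$(j+2,m+2) - g$$(j+2,0) * g$$(k,m+2))"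

lemma Mk_carr: "Mk k \<in> carrier_mat (n-1) (n-1)" by (simp add: Mk_def)

lemma vR: assumes "R \<in> carrier_vec (n-1)" "c < Suc n"
  shows "(g *\<^sub>v uvec n R) $ c = (\<Sum>m\<in>{0..<n-1}. R$m * g$$(c,m+2))"
proof -
  have "(g *\<^sub>v uvec n R) $ c = (\<Sum>l\<in>{0..<Suc n}. g$$(c,l) * (uvec n R)$l)"
    using assms by (simp add: scalar_prod_def del: sum.op_ivl_Suc)
  also have "\<dots> = (\<Sum>l\<in>{2..<Suc n}. g$$(c,l) * (uvec n R)$l)"
    by (rule sum.mono_neutral_right) (auto simp: uvec_def)
  also have "{2..<Suc n} = {0+2..<(n-1)+2}" using n2 by auto
  also have "(\<Sum>l\<in>{0+2..<(n-1)+2}. g$$(c,l) * (uvec n R)$l) = (\<Sum>m\<in>{0..<n-1}. g$$(c,m+2) * (uvec n R)$(m+2))"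
    by (rule sum.shift_bounds_nat_ivl)
  also have "\<dots> = (\<Sum>m\<in>{0..<n-1}. R$m * g$$(c,m+2))"
    using n2 by (intro sum.cong) (auto simp: uvec_def)
  finally show ?thesis .
qed

lemma Mv: assumes R: "R \<in> carrier_vec (n-1)" and k: "k < Suc n"
  shows "Mk k *\<^sub>v R = rowmap n g k (Xn n R)"
proof (rule eq_vecI)
  fix j assume "j < dim_vec (rowmap n g k (Xn n R))"
  then have j: "j < n - 1" by (simp add: rowmap_def)
  then have j2: "j + 2 < Suc n" by simp
  have "(Mk k *\<^sub>v R) $ j = (\<Sum>m\<in>{0..<n-1}. (g$$(k,0) * g$$(j+2,m+2) - g$$(j+2,0) * g$$(k,m+2)) * R$m)"
    using j R by (simp add: Mk_def scalar_prod_def)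
  also have "\<dots> = g$$(k,0) * (\<Sum>m\<in>{0..<n-1}. R$m * g$$(j+2,m+2)) - g$$(j+2,0) * (\<Sum>m\<in>{0..<n-1}. R$m * g$$(k,m+2))"
    by (rule sum_lin2)
  also have "\<dots> = g$$(k,0) * (g *\<^sub>v uvec n R) $ (j+2) - (g *\<^sub>v uvec n R) $ k * g$$(j+2,0)"
    using vR[OF R j2] vR[OF R k] by simp
  also have "\<dots> = rowmap n g k (Xn n R) $ j"
    using rowmap_eq[OF k] j j2 k by (simp del: index_mult_mat_vec)
  finally show "(Mk k *\<^sub>v R) $ j = rowmap n g k (Xn n R) $ j" .
qed (simp add: Mk_def rowmap_def)

lemma bij_k: assumes k: "k < 2" and ak: "g $$ (k,0) \<noteq> 0"
  shows "bij_betw (rowmap n g k) (nfrak n) (carrier_vec (n - 1))"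
proof -
  let ?M = "Mk k"
  have k1: "k < Suc n" using k n2 by simp
  have inj0: "x = 0\<^sub>v (n-1)" if x: "x \<in> carrier_vec (n-1)" and Mx: "?M *\<^sub>v x = 0\<^sub>v (n-1)" for x
  proof -
    have rz: "rowmap n g k (Xn n x) = 0\<^sub>v (n-1)" using Mv[OF x k1] Mx by simp
    have "\<forall>j<n-1. g $$ (k,0) * (g *\<^sub>v uvec n x)$(j+2) - (g *\<^sub>v uvec n x)$k * g $$ (j+2,0) = 0"
    proof (intro allI impI)
      fix j assume j: "j < n - 1"
      then have j2: "j + 2 < Suc n" by simp
      have "rowmap n g k (Xn n x) $ j = 0" using rz j by simp
      then show "g $$ (k,0) * (g *\<^sub>v uvec n x)$(j+2) - (g *\<^sub>v uvec n x)$k * g $$ (j+2,0) = 0"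
        using rowmap_eq[OF k1, of x] j j2 k1 by (simp del: index_mult_mat_vec)
    qed
    from kernel[OF k ak this] show ?thesis using x by (intro eq_vecI) auto
  qed
  have det: "det ?M \<noteq> 0"
    using det_0_iff_vec_prod_zero[OF Mk_carr, of k] inj0 by auto
  have injM: "x = y" if "x \<in> carrier_vec (n-1)" "y \<in> carrier_vec (n-1)" "?M *\<^sub>v x = ?M *\<^sub>v y" for x y
  proof -
    have "?M *\<^sub>v (x - y) = ?M *\<^sub>v x - ?M *\<^sub>v y"
      using that by (intro mult_minus_distrib_mat_vec[OF Mk_carr])
    also have "\<dots> = 0\<^sub>v (n-1)" using that Mk_carr[of k] by simp
    finally have Mxy: "?M *\<^sub>v (x - y) = 0\<^sub>v (n-1)" .
    have xyc: "x - y \<in> carrier_vec (n-1)" using that by simp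
    have "x - y = 0\<^sub>v (n-1)" by (rule inj0[OF xyc Mxy])
    note d = this
    show ?thesis
    proof (rule eq_vecI)
      fix i assume "i < dim_vec y"
      then have i: "i < n - 1" using that by simp
      have "(x - y) $ i = 0" using d i by simp
      then show "x $ i = y $ i" using i that by simp
    qed (use that in simp)
  qed
  define B where "B = (1 / det ?M) \<cdot>\<^sub>m adj_mat ?M"
  have Bc: "B \<in> carrier_mat (n-1) (n-1)" unfolding B_def using adj_mat(1)[OF Mk_carr] by simp
  have MB: "?M * B = 1\<^sub>m (n-1)"
  proof -
    have "?M * B = (1 / det ?M) \<cdot>\<^sub>m (?M * adj_mat ?M)"
      unfolding B_def by (rule mult_smult_distrib[OF Mk_carr adj_mat(1)[OF Mk_carr]])
    also have "\<dots> = (1 / det ?M) \<cdot>\<^sub>m (det ?M \<cdot>\<^sub>m 1\<^sub>m (n-1))" using adj_mat(2)[OF Mk_carr] by simp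
    also have "\<dots> = 1\<^sub>m (n-1)" using det by (intro eq_matI) auto
    finally show ?thesis .
  qed
  show ?thesis unfolding bij_betw_def nfrak_def
  proof
    show "inj_on (rowmap n g k) (Xn n ` carrier_vec (n - 1))"
    proof (rule inj_onI)
      fix X Y assume "X \<in> Xn n ` carrier_vec (n - 1)" "Y \<in> Xn n ` carrier_vec (n - 1)"
        and e: "rowmap n g k X = rowmap n g k Y"
      then obtain x y where xy: "x \<in> carrier_vec (n-1)" "y \<in> carrier_vec (n-1)" "X = Xn n x" "Y = Xn n y" by auto
      have "?M *\<^sub>v x = ?M *\<^sub>v y" using e xy Mv[OF _ k1] by simp
      then have "x = y" using injM xy by auto
      then show "X = Y" using xy by simp
    qed
    show "rowmap n g k ` Xn n ` carrier_vec (n - 1) = carrier_vec (n - 1)"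
    proof
      show "rowmap n g k ` Xn n ` carrier_vec (n - 1) \<subseteq> carrier_vec (n - 1)"
        by (auto simp: rowmap_def)
      show "carrier_vec (n - 1) \<subseteq> rowmap n g k ` Xn n ` carrier_vec (n - 1)"
      proof
        fix t :: "real vec" assume t: "t \<in> carrier_vec (n - 1)"
        define x where "x = B *\<^sub>v t"
        have xc: "x \<in> carrier_vec (n-1)" unfolding x_def using Bc t by simp
        have "rowmap n g k (Xn n x) = ?M *\<^sub>v x" using Mv[OF xc k1] by simp
        also have "\<dots> = (?M * B) *\<^sub>v t" unfolding x_def using Bc t Mk_carr[of k]
          by (simp add: assoc_mult_mat_vec)
        also have "\<dots> = t" using MB t by simp
        finally show "t \<in> rowmap n g k ` Xn n ` carrier_vec (n - 1)" using xc by force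
      qed
    qed
  qed
qed

end

theorem lemma6:
  fixes n :: nat and g :: "real mat"
  assumes "n \<ge> 2" and "g \<in> SO1n n"
  shows "bij_betw (rowmap n g 0) (nfrak n) (carrier_vec (n - 1))
       \<or> bij_betw (rowmap n g 1) (nfrak n) (carrier_vec (n - 1))"
proof -
  interpret SOg n g using assms by unfold_locales
  show ?thesis using a_nonzero bij_k[of 0] bij_k[of 1] by auto
qed

end
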